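(* Let $\mathfrak{g}$ be the affine Lie algebra of type $D^{(1)}_4$ with the $\mathbb{Z}$-gradation of type $s=(1,1,0,1,1)$, grading element $d_s$, normalized invariant form $(\,|\,)$ and Heisenberg elements $\Lambda_{k,i}$ as described in the context. Let $W=W(t_{1,1},t_{1,2},t_{3,1},t_{3,2},\ldots)$ be a $G_{<0}$-valued (formal) function satisfying the Sato equations \[ \partial_{k,i}(W)=B_{k,i}W-W\Lambda_{k,i}\qquad (i=1,2;\ k=1,3,5,\ldots), \] understood as $\partial_{k,i}-B_{k,i}=W(\partial_{k,i}-\Lambda_{k,i})W^{-1}$, where $\partial_{k,i}=\partial/\partial t_{k,i}$ and $B_{k,i}$ is the $\mathfrak{g}_{\geq0}$-component of $W\Lambda_{k,i}W^{-1}\in\widehat{\mathfrak{g}}_{<0}\oplus\mathfrak{g}_{\geq0}$. Write $B_{1,i}=\Lambda_{1,i}+U_i$ $(i=1,2)$, where $U_i$ is $\mathfrak{g}_0(s)$-valued. Then \[ (d_s\,|\,\partial_{1,i}(U_j))+\tfrac{1}{2}(U_i\,|\,U_j)=0\qquad (i,j=1,2). \]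
   Context: $\mathfrak{g}=\mathfrak{g}(D^{(1)}_4)$ is the Lie algebra generated by $e_i,f_i,\alpha_i^\vee$ $(i=0,\ldots,4)$ and $d$ with relations $(\mathrm{ad}\,e_i)^{1-a_{ij}}(e_j)=0$, $(\mathrm{ad}\,f_i)^{1-a_{ij}}(f_j)=0$ $(i\neq j)$, $[\alpha_i^\vee,\alpha_j^\vee]=0$, $[\alpha_i^\vee,e_j]=a_{ij}e_j$, $[\alpha_i^\vee,f_j]=-a_{ij}f_j$, $[e_i,f_j]=\delta_{ij}\alpha_i^\vee$, $[d,\alpha_i^\vee]=0$, $[d,e_i]=\delta_{i0}e_0$, $[d,f_i]=-\delta_{i0}f_0$, where $A=(a_{ij})$ is the Cartan matrix with $a_{ii}=2$, $a_{2j}=a_{j2}=-1$ for $j=0,1,3,4$, and all other entries $0$. $\mathfrak{h}=\bigoplus_j\mathbb{C}\alpha_j^\vee\oplus\mathbb{C}d$; $K=\alpha_0^\vee+\alpha_1^\vee+2\alpha_2^\vee+\alpha_3^\vee+\alpha_4^\vee$. The invariant form is determined by $(\alpha_i^\vee|\alpha_j^\vee)=a_{ij}$, $(e_i|f_j)=\delta_{ij}$, $(\alpha_i^\vee|e_j)=(\alpha_i^\vee|f_j)=0$, $(d|d)=0$, $(d|\alpha_j^\vee)=\delta_{0j}$, $(d|e_j)=(d|f_j)=0$. The gradation of type $s=(1,1,0,1,1)$: $\deg\mathfrak{h}=\deg e_2=\deg f_2=0$, $\deg e_i=1$, $\deg f_i=-1$ for $i=0,1,3,4$; equivalently $\mathfrak{g}_k(s)=\{x:[d_s,x]=kx\}$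 with $d_s=4d+2\alpha_1^\vee+3\alpha_2^\vee+2\alpha_3^\vee+2\alpha_4^\vee$. $\mathfrak{g}_{<0}=\bigoplus_{k<0}\mathfrak{g}_k(s)$, $\mathfrak{g}_{\ge0}=\bigoplus_{k\ge0}\mathfrak{g}_k(s)$; $\widehat{\mathfrak{g}}_{<0}$ is the completion of $\mathfrak{g}_{<0}$ and $G_{<0}=\exp(\widehat{\mathfrak{g}}_{<0})$. Write $e_{2j}=[e_2,e_j]$. $\Lambda_{1,1}=-e_0+e_1+e_3-e_{21}+e_{23}+e_{24}$, $\Lambda_{1,2}=e_1-e_3+e_4+e_{20}+e_{21}+e_{23}$. The Heisenberg subalgebra is $\mathfrak{s}=\{x\in\mathfrak{g}:[\Lambda_{1,1},x]\in\mathbb{C}K\}=\bigoplus_k\mathfrak{s}_k(s)$, with $\mathfrak{s}_{2k-1}(s)=\mathbb{C}\Lambda_{2k-1,1}\oplus\mathbb{C}\Lambda_{2k-1,2}$ for chosen elements satisfying $[\Lambda_{2k-1,i},\Lambda_{2l-1,j}]=(2k-1)\delta_{ij}\delta_{k+l,1}K$. *)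

theory Defs
  imports Complex_Main
begin

definition lie_alg :: "(complex \<Rightarrow> 'g::ab_group_add \<Rightarrow> 'g) \<Rightarrow> ('g \<Rightarrow> 'g \<Rightarrow> 'g) \<Rightarrow> bool" where
  "lie_alg sm br \<longleftrightarrow> vector_space sm
     \<and> (\<forall>x y z. br (x + y) z = br x z + br y z)
     \<and> (\<forall>c x y. br (sm c x) y = sm c (br x y))
     \<and> (\<forall>x. br x x = 0)
     \<and> (\<forall>x y z. br x (br y z) + br y (br z x) + br z (br x y) = 0)"

definition inv_form :: "(complex \<Rightarrow> 'g::ab_group_add \<Rightarrow> 'g) \<Rightarrow> ('g \<Rightarrow> 'g \<Rightarrow> 'g) \<Rightarrow> ('g \<Rightarrow> 'g \<Rightarrow> complex) \<Rightarrow> bool" where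
  "inv_form sm br B \<longleftrightarrow>
       (\<forall>x y z. B (x + y) z = B x z + B y z)
     \<and> (\<forall>c x y. B (sm c x) y = c * B x y)
     \<and> (\<forall>x y. B x y = B y x)
     \<and> (\<forall>x y z. B (br x y) z = B x (br y z))
     \<and> (\<forall>x. (\<forall>y. B x y = 0) \<longrightarrow> x = 0)"

inductive_set lie_gen :: "(complex \<Rightarrow> 'g::ab_group_add \<Rightarrow> 'g) \<Rightarrow> ('g \<Rightarrow> 'g \<Rightarrow> 'g) \<Rightarrow> 'g set \<Rightarrow> 'g set"
  for sm br S where
  gen_base: "x \<in> S \<Longrightarrow> x \<in> lie_gen sm br S"
| gen_zero: "0 \<in> lie_gen sm br S"
| gen_add: "x \<in> lie_gen sm br S \<Longrightarrow> y \<in> lie_gen sm br S \<Longrightarrow> x + y \<in> lie_gen sm br S"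
| gen_smul: "x \<in> lie_gen sm br S \<Longrightarrow> sm c x \<in> lie_gen sm br S"
| gen_br: "x \<in> lie_gen sm br S \<Longrightarrow> y \<in> lie_gen sm br S \<Longrightarrow> br x y \<in> lie_gen sm br S"

definition cartanD4 :: "nat \<Rightarrow> nat \<Rightarrow> int" where
  "cartanD4 i j = (if i = j then 2 else if i = 2 \<or> j = 2 then -1 else 0)"

text \<open>Generators e_i, f_i, alpha_i^vee (= hv i), i = 0..4, and d, satisfying the defining
  relations, generating the algebra, with h = span(alpha_i^vee, d) of dimension 6.
  (Any such Lie algebra is isomorphic to g(D4^(1)): it is a quotient of the presented
  algebra by an ideal meeting h trivially, and g(A) has no such nonzero ideal.)\<close>
definition D4_presentation :: "(complex \<Rightarrow> 'g::ab_group_add \<Rightarrow> 'g) \<Rightarrow> ('g \<Rightarrow> 'g \<Rightarrow> 'g)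
   \<Rightarrow> (nat \<Rightarrow> 'g) \<Rightarrow> (nat \<Rightarrow> 'g) \<Rightarrow> (nat \<Rightarrow> 'g) \<Rightarrow> 'g \<Rightarrow> bool" where
  "D4_presentation sm br e f hv d \<longleftrightarrow>
     (\<forall>i\<le>4. \<forall>j\<le>4. i \<noteq> j \<longrightarrow>
         ((br (e i)) ^^ nat (1 - cartanD4 i j)) (e j) = 0
       \<and> ((br (f i)) ^^ nat (1 - cartanD4 i j)) (f j) = 0)
   \<and> (\<forall>i\<le>4. \<forall>j\<le>4.
         br (hv i) (hv j) = 0
       \<and> br (hv i) (e j) = sm (of_int (cartanD4 i j)) (e j)
       \<and> br (hv i) (f j) = sm (- of_int (cartanD4 i j)) (f j)
       \<and> br (e i) (f j) = (if i = j then hv i else 0))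
   \<and> (\<forall>i\<le>4. br d (hv i) = 0
       \<and> br d (e i) = (if i = 0 then e 0 else 0)
       \<and> br d (f i) = (if i = 0 then - f 0 else 0))
   \<and> (\<forall>c :: nat \<Rightarrow> complex. (\<Sum>i\<le>4. sm (c i) (hv i)) + sm (c 5) d = 0 \<longrightarrow> (\<forall>i\<le>5. c i = 0))
   \<and> lie_gen sm br ({e i |i. i \<le> 4} \<union> {f i |i. i \<le> 4} \<union> {hv i |i. i \<le> 4} \<union> {d}) = UNIV"

definition D4_form_values :: "('g::ab_group_add \<Rightarrow> 'g \<Rightarrow> complex)
   \<Rightarrow> (nat \<Rightarrow> 'g) \<Rightarrow> (nat \<Rightarrow> 'g) \<Rightarrow> (nat \<Rightarrow> 'g) \<Rightarrow> 'g \<Rightarrow> bool" where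
  "D4_form_values B e f hv d \<longleftrightarrow>
     (\<forall>i\<le>4. \<forall>j\<le>4.
         B (hv i) (hv j) = of_int (cartanD4 i j)
       \<and> B (e i) (f j) = (if i = j then 1 else 0)
       \<and> B (hv i) (e j) = 0 \<and> B (hv i) (f j) = 0)
   \<and> B d d = 0
   \<and> (\<forall>j\<le>4. B d (hv j) = (if j = 0 then 1 else 0) \<and> B d (e j) = 0 \<and> B d (f j) = 0)"

definition centK :: "(complex \<Rightarrow> 'g::ab_group_add \<Rightarrow> 'g) \<Rightarrow> (nat \<Rightarrow> 'g) \<Rightarrow> 'g" where
  "centK sm hv = hv 0 + hv 1 + sm 2 (hv 2) + hv 3 + hv 4"

definition d_s :: "(complex \<Rightarrow> 'g::ab_group_add \<Rightarrow> 'g) \<Rightarrow> (nat \<Rightarrow> 'g) \<Rightarrow> 'g \<Rightarrow> 'g" where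
  "d_s sm hv d = sm 4 d + sm 2 (hv 1) + sm 3 (hv 2) + sm 2 (hv 3) + sm 2 (hv 4)"

definition gdeg :: "(complex \<Rightarrow> 'g::ab_group_add \<Rightarrow> 'g) \<Rightarrow> ('g \<Rightarrow> 'g \<Rightarrow> 'g) \<Rightarrow> (nat \<Rightarrow> 'g) \<Rightarrow> 'g \<Rightarrow> int \<Rightarrow> 'g set" where
  "gdeg sm br hv d k = {x. br (d_s sm hv d) x = sm (of_int k) x}"

definition Lam11 :: "('g::ab_group_add \<Rightarrow> 'g \<Rightarrow> 'g) \<Rightarrow> (nat \<Rightarrow> 'g) \<Rightarrow> 'g" where
  "Lam11 br e = - e 0 + e 1 + e 3 - br (e 2) (e 1) + br (e 2) (e 3) + br (e 2) (e 4)"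

definition Lam12 :: "('g::ab_group_add \<Rightarrow> 'g \<Rightarrow> 'g) \<Rightarrow> (nat \<Rightarrow> 'g) \<Rightarrow> 'g" where
  "Lam12 br e = e 1 - e 3 + e 4 + br (e 2) (e 0) + br (e 2) (e 1) + br (e 2) (e 3)"

definition heis :: "(complex \<Rightarrow> 'g::ab_group_add \<Rightarrow> 'g) \<Rightarrow> ('g \<Rightarrow> 'g \<Rightarrow> 'g) \<Rightarrow> (nat \<Rightarrow> 'g) \<Rightarrow> (nat \<Rightarrow> 'g) \<Rightarrow> 'g set" where
  "heis sm br e hv = {x. \<exists>c. br (Lam11 br e) x = sm c (centK sm hv)}"

definition heis_basis :: "(complex \<Rightarrow> 'g::ab_group_add \<Rightarrow> 'g) \<Rightarrow> ('g \<Rightarrow> 'g \<Rightarrow> 'g)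
   \<Rightarrow> (nat \<Rightarrow> 'g) \<Rightarrow> (nat \<Rightarrow> 'g) \<Rightarrow> 'g \<Rightarrow> (int \<Rightarrow> nat \<Rightarrow> 'g) \<Rightarrow> bool" where
  "heis_basis sm br e hv d Lam \<longleftrightarrow>
     Lam 1 1 = Lam11 br e \<and> Lam 1 2 = Lam12 br e
   \<and> (\<forall>k. odd k \<longrightarrow>
         Lam k 1 \<in> gdeg sm br hv d k \<and> Lam k 2 \<in> gdeg sm br hv d k
       \<and> heis sm br e hv \<inter> gdeg sm br hv d k = {sm a (Lam k 1) + sm b (Lam k 2) |a b. True}
       \<and> (\<forall>a b. sm a (Lam k 1) + sm b (Lam k 2) = 0 \<longrightarrow> a = 0 \<and> b = 0))
   \<and> (\<forall>k l. odd k \<and> odd l \<longrightarrow> (\<forall>i\<in>{1,2}. \<forall>j\<in>{1,2}.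
         br (Lam k i) (Lam l j) = (if i = j \<and> k + l = 0 then sm (of_int k) (centK sm hv) else 0)))"

text \<open>A formal function is given by its coefficients: F alpha is the coefficient of the
  monomial prod t_(k,i)^(alpha (k,i)).\<close>
type_synonym mon = "nat \<times> nat \<Rightarrow> nat"

definition tvars :: "(nat \<times> nat) set" where
  "tvars = {(k, i). odd k \<and> i \<in> {1, 2}}"

definition tmons :: "mon set" where
  "tmons = {\<alpha>. finite {x. \<alpha> x \<noteq> 0} \<and> {x. \<alpha> x \<noteq> 0} \<subseteq> tvars}"

definition fconst :: "'a::zero \<Rightarrow> mon \<Rightarrow> 'a" where
  "fconst X = (\<lambda>\<alpha>. if \<alpha> = (\<lambda>_. 0) then X else 0)"

definition fprod :: "('a \<Rightarrow> 'b \<Rightarrow> 'c::comm_monoid_add) \<Rightarrow> (mon \<Rightarrow> 'a) \<Rightarrow> (mon \<Rightarrow> 'b) \<Rightarrow> mon \<Rightarrow> 'c" where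
  "fprod p F G = (\<lambda>\<alpha>. \<Sum>\<beta>\<in>{\<beta>. \<forall>x. \<beta> x \<le> \<alpha> x}. p (F \<beta>) (G (\<lambda>x. \<alpha> x - \<beta> x)))"

definition fdiff :: "(complex \<Rightarrow> 'g \<Rightarrow> 'g) \<Rightarrow> nat \<times> nat \<Rightarrow> (mon \<Rightarrow> 'g) \<Rightarrow> mon \<Rightarrow> 'g" where
  "fdiff sm kk F = (\<lambda>\<alpha>. sm (of_nat (\<alpha> kk + 1)) (F (\<alpha>(kk := \<alpha> kk + 1))))"

section \<open>W = exp(w), w = sum_(n>=1) w_(-n) in the completion of g_(<0)\<close>

text \<open>w n is the (time dependent) component of w of degree -n.
  adch w [c1,...,cr] F = ad(w c1) ... ad(w cr) F.\<close>
fun adch :: "('g \<Rightarrow> 'g \<Rightarrow> 'g::comm_monoid_add) \<Rightarrow> (nat \<Rightarrow> mon \<Rightarrow> 'g) \<Rightarrow> nat list \<Rightarrow> (mon \<Rightarrow> 'g) \<Rightarrow> mon \<Rightarrow> 'g" where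
  "adch br w [] F = F"
| "adch br w (c # cs) F = fprod br (w c) (adch br w cs F)"

definition comps :: "nat \<Rightarrow> nat list set" where
  "comps N = {c. (\<forall>x\<in>set c. 1 \<le> x) \<and> sum_list c = N}"

text \<open>Component of degree (deg X - N) of W X W^(-1) = exp(ad w) X, for homogeneous X.\<close>
definition Ad_comp :: "(complex \<Rightarrow> 'g::ab_group_add \<Rightarrow> 'g) \<Rightarrow> ('g \<Rightarrow> 'g \<Rightarrow> 'g) \<Rightarrow> (nat \<Rightarrow> mon \<Rightarrow> 'g)
    \<Rightarrow> 'g \<Rightarrow> nat \<Rightarrow> mon \<Rightarrow> 'g" where
  "Ad_comp sm br w X N = (\<lambda>\<alpha>. \<Sum>c\<in>comps N. sm (1 / fact (length c)) (adch br w c (fconst X) \<alpha>))"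

text \<open>Component of degree -N of (d_kk W) W^(-1) = sum_n (ad w)^n (d_kk w) / (n+1)!.\<close>
definition dlog_comp :: "(complex \<Rightarrow> 'g::ab_group_add \<Rightarrow> 'g) \<Rightarrow> ('g \<Rightarrow> 'g \<Rightarrow> 'g) \<Rightarrow> (nat \<Rightarrow> mon \<Rightarrow> 'g)
    \<Rightarrow> nat \<times> nat \<Rightarrow> nat \<Rightarrow> mon \<Rightarrow> 'g" where
  "dlog_comp sm br w kk N = (\<lambda>\<alpha>. \<Sum>(c, m)\<in>{(c, m). (\<forall>x\<in>set c. 1 \<le> x) \<and> 1 \<le> m \<and> sum_list c + m = N}.
      sm (1 / fact (length c + 1)) (adch br w c (fdiff sm kk (w m)) \<alpha>))"

text \<open>B_(k,i) = (W Lam_(k,i) W^(-1))_(>=0): the components of degrees k, k-1, ..., 0.\<close>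
definition Bop :: "(complex \<Rightarrow> 'g::ab_group_add \<Rightarrow> 'g) \<Rightarrow> ('g \<Rightarrow> 'g \<Rightarrow> 'g) \<Rightarrow> (nat \<Rightarrow> mon \<Rightarrow> 'g)
    \<Rightarrow> 'g \<Rightarrow> nat \<Rightarrow> mon \<Rightarrow> 'g" where
  "Bop sm br w X k = (\<lambda>\<alpha>. \<Sum>N\<le>k. Ad_comp sm br w X N \<alpha>)"

definition Ufun :: "(complex \<Rightarrow> 'g::ab_group_add \<Rightarrow> 'g) \<Rightarrow> ('g \<Rightarrow> 'g \<Rightarrow> 'g) \<Rightarrow> (nat \<Rightarrow> mon \<Rightarrow> 'g)
    \<Rightarrow> (int \<Rightarrow> nat \<Rightarrow> 'g) \<Rightarrow> nat \<Rightarrow> mon \<Rightarrow> 'g" where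
  "Ufun sm br w Lam i = (\<lambda>\<alpha>. Bop sm br w (Lam 1 i) 1 \<alpha> - fconst (Lam 1 i) \<alpha>)"

text \<open>Sato equations d_(k,i) - B_(k,i) = W (d_(k,i) - Lam_(k,i)) W^(-1), i.e.
  B_(k,i) = (d_(k,i) W) W^(-1) + W Lam_(k,i) W^(-1). Since B is the part of degree >= 0
  and (d W) W^(-1) has only negative degrees, this amounts to: every component of degree
  -N (N >= 1) of (d_(k,i) W) W^(-1) + W Lam_(k,i) W^(-1) vanishes.\<close>
definition sato_eqs :: "(complex \<Rightarrow> 'g::ab_group_add \<Rightarrow> 'g) \<Rightarrow> ('g \<Rightarrow> 'g \<Rightarrow> 'g)
   \<Rightarrow> (nat \<Rightarrow> 'g) \<Rightarrow> 'g \<Rightarrow> (int \<Rightarrow> nat \<Rightarrow> 'g) \<Rightarrow> (nat \<Rightarrow> mon \<Rightarrow> 'g) \<Rightarrow> bool" where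
  "sato_eqs sm br hv d Lam w \<longleftrightarrow>
     w 0 = (\<lambda>_. 0)
   \<and> (\<forall>n \<alpha>. w n \<alpha> \<in> gdeg sm br hv d (- int n))
   \<and> (\<forall>n \<alpha>. \<alpha> \<notin> tmons \<longrightarrow> w n \<alpha> = 0)
   \<and> (\<forall>k i N. odd k \<and> i \<in> {1, 2} \<and> 1 \<le> N \<longrightarrow>
        (\<forall>\<alpha>\<in>tmons. dlog_comp sm br w (k, i) N \<alpha> + Ad_comp sm br w (Lam (int k) i) (k + N) \<alpha> = 0))"

end

theory Submission
  imports Defs
begin

lemma len_le_sum: "(\<forall>x\<in>set c. (1::nat) \<le> x) \<Longrightarrow> length c \<le> sum_list c"
  by (induction c) auto

lemma comps_iff: "c \<in> comps N \<longleftrightarrow> (\<forall>x\<in>set c. 1 \<le> x) \<and> sum_list c = N"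
  by (simp add: comps_def)

lemma comps0: "comps 0 = {[]}"
proof (intro set_eqI iffI)
  fix c assume "c \<in> comps 0"
  then have h: "\<forall>x\<in>set c. 1 \<le> x" "sum_list c = 0" by (simp_all add: comps_iff)
  have "length c \<le> 0" using len_le_sum[OF h(1)] h(2) by simp
  then show "c \<in> {[]}" by simp
next
  fix c :: "nat list" assume "c \<in> {[]}"
  then show "c \<in> comps 0" by (simp add: comps_iff)
qed

lemma comps1: "comps 1 = {[1]}"
proof (intro set_eqI iffI)
  fix c assume "c \<in> comps 1"
  then have h: "\<forall>x\<in>set c. 1 \<le> x" "sum_list c = 1" by (simp_all add: comps_iff)
  have "length c \<le> 1" using len_le_sum[OF h(1)] h(2) by simp
  then show "c \<in> {[1]}"
  proof (cases c)
    case Nil then show ?thesis using h by simp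
  next
    case (Cons a t)
    then have "t = []" using \<open>length c \<le> 1\<close> by simp
    then show ?thesis using h Cons by simp
  qed
next
  fix c :: "nat list" assume "c \<in> {[1]}"
  then show "c \<in> comps 1" by (simp add: comps_iff)
qed

lemma comps2: "comps 2 = {[2], [1,1]}"
proof (intro set_eqI iffI)
  fix c assume "c \<in> comps 2"
  then have h: "\<forall>x\<in>set c. 1 \<le> x" "sum_list c = 2" by (simp_all add: comps_iff)
  have "length c \<le> 2" using len_le_sum[OF h(1)] h(2) by simp
  then show "c \<in> {[2], [1,1]}"
  proof (cases c)
    case Nil then show ?thesis using h by simp
  next
    case (Cons a t)
    show ?thesis
    proof (cases t)
      case Nil then show ?thesis using h \<open>c = a # t\<close> by simp
    next
      case (Cons b u)
      then have "u = []" using \<open>length c \<le> 2\<close> \<open>c = a # t\<close> by simp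
      then have "c = [a, b]" using Cons \<open>c = a # t\<close> by simp
      moreover have "a = 1" "b = 1" using h unfolding \<open>c = [a, b]\<close> by simp_all
      ultimately show ?thesis by simp
    qed
  qed
next
  fix c :: "nat list" assume "c \<in> {[2], [1,1]}"
  then show "c \<in> comps 2" by (auto simp add: comps_iff)
qed

lemma dlog_set1: "{(c, m). (\<forall>x\<in>set c. (1::nat) \<le> x) \<and> 1 \<le> m \<and> sum_list c + m = 1} = {([], 1)}"
proof (intro set_eqI iffI)
  fix p :: "nat list \<times> nat"
  assume "p \<in> {(c, m). (\<forall>x\<in>set c. (1::nat) \<le> x) \<and> 1 \<le> m \<and> sum_list c + m = 1}"
  then obtain c m where p: "p = (c, m)" and h: "\<forall>x\<in>set c. (1::nat) \<le> x" "1 \<le> m" "sum_list c + m = 1"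
    by blast
  have "sum_list c = 0" using h(2,3) by arith
  then have "length c = 0" using len_le_sum[OF h(1)] by arith
  then show "p \<in> {([], 1)}" using p h by simp
next
  fix p :: "nat list \<times> nat" assume "p \<in> {([], 1)}"
  then show "p \<in> {(c, m). (\<forall>x\<in>set c. (1::nat) \<le> x) \<and> 1 \<le> m \<and> sum_list c + m = 1}" by simp
qed

lemma fin_le:
  assumes "finite {x. (\<alpha>::mon) x \<noteq> 0}"
  shows "finite {\<beta>::mon. \<forall>x. \<beta> x \<le> \<alpha> x}"
proof -
  let ?S = "{x. \<alpha> x \<noteq> 0}"
  let ?T = "{f. \<forall>x. (x \<in> ?S \<longrightarrow> f x \<in> {..(\<Sum>y\<in>?S. \<alpha> y)}) \<and> (x \<notin> ?S \<longrightarrow> f x = (0::nat))}"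
  have "\<beta> \<in> ?T" if b: "\<forall>x. \<beta> x \<le> \<alpha> x" for \<beta> :: mon
  proof -
    have "\<beta> x \<le> (\<Sum>y\<in>?S. \<alpha> y)" if "\<alpha> x \<noteq> 0" for x
    proof -
      have "\<alpha> x \<le> (\<Sum>y\<in>?S. \<alpha> y)" using member_le_sum[of x ?S \<alpha>] assms that by auto
      then show ?thesis using b order_trans by blast
    qed
    moreover have "\<beta> x = 0" if "\<alpha> x = 0" for x using b that by (metis le_zero_eq)
    ultimately show ?thesis by auto
  qed
  then have "{\<beta>::mon. \<forall>x. \<beta> x \<le> \<alpha> x} \<subseteq> ?T" by blast
  moreover have "finite ?T"
    by (rule finite_set_of_finite_funs) (use assms in auto)
  ultimately show ?thesis by (rule finite_subset)
qed

lemma fprod_fconst: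
  assumes "finite {x. (\<alpha>::mon) x \<noteq> 0}" and "\<And>a. p a 0 = (0::'c::comm_monoid_add)"
  shows "fprod p F (fconst X) \<alpha> = p (F \<alpha>) X"
proof -
  let ?L = "{\<beta>::mon. \<forall>x. \<beta> x \<le> \<alpha> x}"
  have fin: "finite ?L" by (rule fin_le[OF assms(1)])
  have "fprod p F (fconst X) \<alpha> = p (F \<alpha>) (fconst X (\<lambda>x. \<alpha> x - \<alpha> x)) +
     (\<Sum>\<beta>\<in>?L - {\<alpha>}. p (F \<beta>) (fconst X (\<lambda>x. \<alpha> x - \<beta> x)))"
    unfolding fprod_def using fin by (subst sum.remove[of _ \<alpha>]) auto
  also have "(\<Sum>\<beta>\<in>?L - {\<alpha>}. p (F \<beta>) (fconst X (\<lambda>x. \<alpha> x - \<beta> x))) = 0"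
  proof (rule sum.neutral, rule ballI)
    fix \<beta> :: mon assume "\<beta> \<in> ?L - {\<alpha>}"
    then have b: "\<forall>x. \<beta> x \<le> \<alpha> x" "\<beta> \<noteq> \<alpha>" by auto
    then obtain x where "\<beta> x \<noteq> \<alpha> x" using ext[of \<beta> \<alpha>] by blast
    with b have "\<alpha> x - \<beta> x \<noteq> 0" by (metis diff_is_0_eq le_antisym)
    then have "(\<lambda>x. \<alpha> x - \<beta> x) \<noteq> (\<lambda>_. 0)" using fun_cong[of "\<lambda>x. \<alpha> x - \<beta> x" "\<lambda>_. 0" x] by auto
    then show "p (F \<beta>) (fconst X (\<lambda>x. \<alpha> x - \<beta> x)) = 0" unfolding fconst_def using assms(2) by simp
  qed
  finally have *: "fprod p F (fconst X) \<alpha> = p (F \<alpha>) (fconst X (\<lambda>x. \<alpha> x - \<alpha> x))" by simp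
  have h: "fconst X (\<lambda>x. \<alpha> x - \<alpha> x) = X" by (simp add: fconst_def)
  show ?thesis by (subst *, subst h, rule refl)
qed

lemma diff_back: "\<forall>x. (\<beta>::mon) x \<le> \<alpha> x \<Longrightarrow> (\<lambda>x. \<alpha> x - (\<alpha> x - \<beta> x)) = \<beta>"
  by (auto intro!: ext)

lemma fprod_swap:
  shows "fprod p F G \<alpha> = fprod (\<lambda>a b. p b a) G F \<alpha>"
  unfolding fprod_def
  apply (rule sum.reindex_bij_witness[where i="\<lambda>\<beta> x. \<alpha> x - \<beta> x" and j="\<lambda>\<beta> x. \<alpha> x - \<beta> x"])
  apply (simp_all add: diff_back)
  done

theorem lemma2p1:
  fixes sm :: "complex \<Rightarrow> 'g::ab_group_add \<Rightarrow> 'g"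
    and br :: "'g \<Rightarrow> 'g \<Rightarrow> 'g"
    and B :: "'g \<Rightarrow> 'g \<Rightarrow> complex"
    and e f hv :: "nat \<Rightarrow> 'g" and d :: 'g
    and Lam :: "int \<Rightarrow> nat \<Rightarrow> 'g"
    and w :: "nat \<Rightarrow> mon \<Rightarrow> 'g"
  assumes "lie_alg sm br"
    and "D4_presentation sm br e f hv d"
    and "inv_form sm br B"
    and "D4_form_values B e f hv d"
    and "heis_basis sm br e hv d Lam"
    and "sato_eqs sm br hv d Lam w"
  shows "\<forall>i\<in>{1, 2}. \<forall>j\<in>{1, 2}. \<forall>\<alpha>\<in>tmons.
           B (d_s sm hv d) (fdiff sm (1, i) (Ufun sm br w Lam j) \<alpha>)
           + 1 / 2 * fprod B (Ufun sm br w Lam i) (Ufun sm br w Lam j) \<alpha> = 0"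
proof -
  have vs: "vector_space sm" using assms(1) unfolding lie_alg_def by blast
  interpret V: vector_space sm by (rule vs)
  have bradd: "\<And>x y z. br (x + y) z = br x z + br y z"
    and brsm: "\<And>c x y. br (sm c x) y = sm c (br x y)"
    and bralt: "\<And>x. br x x = 0"
    using assms(1) unfolding lie_alg_def by blast+
  have Badd: "\<And>x y z. B (x + y) z = B x z + B y z"
    and Bsm: "\<And>c x y. B (sm c x) y = c * B x y"
    and Bsym: "\<And>x y. B x y = B y x"
    and Binv: "\<And>x y z. B (br x y) z = B x (br y z)"
    and Bnd: "\<And>x. \<forall>y. B x y = 0 \<Longrightarrow> x = 0"
    using assms(3) unfolding inv_form_def by blast+
  have B0l: "B 0 z = 0" for z
  proof -
    have "B (0 + 0) z = B 0 z + B 0 z" by (rule Badd)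
    then show ?thesis by simp
  qed
  have Bneg: "B (- x) z = - B x z" for x z
  proof -
    have "B (- x + x) z = B (- x) z + B x z" by (rule Badd)
    then have "B (- x) z + B x z = 0" by (simp add: B0l)
    then show ?thesis by (simp add: eq_neg_iff_add_eq_0)
  qed
  have Bdiff: "B (x - y) z = B x z - B y z" for x y z
    by (simp only: diff_conv_add_uminus Badd Bneg)
  have Baddr: "B x (y + z) = B x y + B x z" for x y z
    by (metis Badd Bsym)
  have brR: "br x (y + z) = br x y + br x z" for x y z
  proof -
    have "\<forall>u. B (br x (y + z) - (br x y + br x z)) u = 0"
    proof
      fix u
      have key: "B (br x Y) u = B (br u x) Y" for Y by (metis Binv Bsym)
      show "B (br x (y + z) - (br x y + br x z)) u = 0"
        by (simp only: Bdiff Badd key Baddr) simp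
    qed
    then have "br x (y + z) - (br x y + br x z) = 0" by (rule Bnd)
    then show ?thesis by simp
  qed
  have br0: "br x 0 = 0" for x
  proof -
    have "br x (0 + 0) = br x 0 + br x 0" by (rule brR)
    then show ?thesis by simp
  qed
  have anti: "br x y = - br y x" for x y
  proof -
    have "0 = br (x + y) (x + y)" by (simp only: bralt)
    also have "\<dots> = br x x + br x y + (br y x + br y y)" by (simp only: bradd brR) (simp add: add_ac)
    also have "\<dots> = br x y + br y x" by (simp add: bralt)
    finally show ?thesis by (simp add: eq_neg_iff_add_eq_0)
  qed
  have B_sum: "B (sum g S) z = (\<Sum>a\<in>S. B (g a) z)" for g :: "mon \<Rightarrow> 'g" and S z
    by (induction S rule: infinite_finite_induct) (simp_all add: B0l Badd)
  have wdeg: "\<And>n \<alpha>. w n \<alpha> \<in> gdeg sm br hv d (- int n)"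
    and SATO: "\<forall>k i N. odd k \<and> i \<in> {1, 2} \<and> 1 \<le> N \<longrightarrow>
        (\<forall>\<alpha>\<in>tmons. dlog_comp sm br w (k, i) N \<alpha> + Ad_comp sm br w (Lam (int k) i) (k + N) \<alpha> = 0)"
    using assms(6) unfolding sato_eqs_def by blast+
  have HB: "\<forall>k l. odd k \<and> odd l \<longrightarrow> (\<forall>i\<in>{1,2}. \<forall>j\<in>{1,2}.
         br (Lam k i) (Lam l j) = (if i = j \<and> k + l = 0 then sm (of_int k) (centK sm hv) else 0))"
    using assms(5) unfolding heis_basis_def by blast
  have LL: "br (Lam 1 i) (Lam 1 j) = 0" if "i \<in> {1,2}" "j \<in> {1,2}" for i j
    using HB[rule_format, of 1 1 i j] that by simp
  have A0: "Ad_comp sm br w X 0 \<gamma> = fconst X \<gamma>" for X \<gamma>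
    unfolding Ad_comp_def comps0 by simp
  have A1: "Ad_comp sm br w X 1 \<gamma> = br (w 1 \<gamma>) X" if "finite {x. \<gamma> x \<noteq> 0}" for X \<gamma>
    using fprod_fconst[of \<gamma> br, OF that br0] unfolding Ad_comp_def comps1 by simp
  have A2: "Ad_comp sm br w X 2 \<gamma> = br (w 2 \<gamma>) X + sm (1/2) (fprod br (w 1) (fprod br (w 1) (fconst X)) \<gamma>)"
    if "finite {x. \<gamma> x \<noteq> 0}" for X \<gamma>
    using fprod_fconst[of \<gamma> br, OF that br0] unfolding Ad_comp_def comps2 by simp
  have D1: "dlog_comp sm br w kk 1 \<gamma> = fdiff sm kk (w 1) \<gamma>" for kk \<gamma>
    unfolding dlog_comp_def dlog_set1 by simp
  have Ueq: "Ufun sm br w Lam k \<gamma> = br (w 1 \<gamma>) (Lam 1 k)" if "finite {x. \<gamma> x \<noteq> 0}" for k \<gamma>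
  proof -
    have "{..1::nat} = {0, 1}" by auto
    then show ?thesis unfolding Ufun_def Bop_def using A1[OF that, of "Lam 1 k"] by (simp add: A0)
  qed
  show ?thesis
  proof (intro ballI)
    fix i j \<alpha> assume i: "i \<in> {1::nat, 2}" and j: "j \<in> {1::nat, 2}" and a: "\<alpha> \<in> tmons"
    have fina: "finite {x. \<alpha> x \<noteq> 0}" using a unfolding tmons_def by blast
    define \<alpha>' where "\<alpha>' = \<alpha>((1, i) := \<alpha> (1, i) + 1)"
    define c :: complex where "c = of_nat (\<alpha> (1, i) + 1)"
    define Li where "Li = Lam 1 i"
    define Lj where "Lj = Lam 1 j"
    define ds where "ds = d_s sm hv d"
    have fina': "finite {x. \<alpha>' x \<noteq> 0}"
      by (rule finite_subset[of _ "insert (1, i) {x. \<alpha> x \<noteq> 0}"]) (use fina in \<open>auto simp: \<alpha>'_def\<close>)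
    have finsub: "finite {x. \<alpha> x - \<beta> x \<noteq> 0}" for \<beta> :: mon
      by (rule finite_subset[OF _ fina]) auto
    have fd: "fdiff sm (1, i) (Ufun sm br w Lam j) \<alpha> = sm c (br (w 1 \<alpha>') Lj)"
      unfolding fdiff_def c_def Lj_def \<alpha>'_def[symmetric] using Ueq[OF fina'] by simp
    have degm: "br ds (w 1 \<alpha>') = - w 1 \<alpha>'"
      using wdeg[of 1 \<alpha>'] unfolding gdeg_def ds_def by simp
    have T1: "B ds (fdiff sm (1, i) (Ufun sm br w Lam j) \<alpha>) = - B (sm c (w 1 \<alpha>')) Lj"
    proof -
      have "B ds (sm c (br (w 1 \<alpha>') Lj)) = c * B ds (br (w 1 \<alpha>') Lj)"
        by (simp only: Bsym[of ds] Bsm)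
      also have "B ds (br (w 1 \<alpha>') Lj) = B (br ds (w 1 \<alpha>')) Lj" by (rule Binv[symmetric])
      also have "\<dots> = - B (w 1 \<alpha>') Lj" unfolding degm by (rule Bneg)
      finally show ?thesis using fd by (simp add: Bsm)
    qed
    define P where "P = fprod br (w 1) (fprod br (w 1) (fconst Li)) \<alpha>"
    have S: "dlog_comp sm br w (1, i) 1 \<alpha> + Ad_comp sm br w (Lam (int 1) i) (1 + 1) \<alpha> = 0"
      by (rule SATO[rule_format]) (use i a in auto)
    have S': "sm c (w 1 \<alpha>') + (br (w 2 \<alpha>) Li + sm (1/2) P) = 0"
      using S unfolding D1 one_add_one A2[OF fina] by (simp add: fdiff_def c_def \<alpha>'_def Li_def P_def)
    have S'': "sm c (w 1 \<alpha>') = - (br (w 2 \<alpha>) Li + sm (1/2) P)"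
      using S' by (simp only: eq_neg_iff_add_eq_0)
    have Z: "B (br (w 2 \<alpha>) Li) Lj = 0"
      unfolding Binv Li_def Lj_def LL[OF i j] by (subst Bsym, rule B0l)
    let ?L = "{\<beta>::mon. \<forall>x. \<beta> x \<le> \<alpha> x}"
    have BP: "B P Lj = - fprod B (Ufun sm br w Lam i) (Ufun sm br w Lam j) \<alpha>"
    proof -
      have "B P Lj = (\<Sum>\<beta>\<in>?L. B (br (w 1 \<beta>) (fprod br (w 1) (fconst Li) (\<lambda>x. \<alpha> x - \<beta> x))) Lj)"
        unfolding P_def fprod_def[of br "w 1" "fprod br (w 1) (fconst Li)"] by (rule B_sum)
      also have "\<dots> = (\<Sum>\<beta>\<in>?L. - B (Ufun sm br w Lam i (\<lambda>x. \<alpha> x - \<beta> x)) (Ufun sm br w Lam j \<beta>))"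
      proof (rule sum.cong[OF refl])
        fix \<beta> :: mon assume "\<beta> \<in> ?L"
        have bb: "\<forall>x. \<beta> x \<le> \<alpha> x" using \<open>\<beta> \<in> ?L\<close> by simp
        have fb: "finite {x. \<beta> x \<noteq> 0}"
        proof (rule finite_subset[OF _ fina], rule subsetI)
          fix x assume "x \<in> {x. \<beta> x \<noteq> 0}"
          then show "x \<in> {x. \<alpha> x \<noteq> 0}" using bb[rule_format, of x] by simp
        qed
        have e1: "fprod br (w 1) (fconst Li) (\<lambda>x. \<alpha> x - \<beta> x) = Ufun sm br w Lam i (\<lambda>x. \<alpha> x - \<beta> x)"
          using fprod_fconst[OF finsub[of \<beta>], of br, OF br0] Ueq[OF finsub[of \<beta>]] Li_def by simp
        have e2: "Ufun sm br w Lam j \<beta> = br (w 1 \<beta>) Lj" using Ueq[OF fb] Lj_def by simp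
        show "B (br (w 1 \<beta>) (fprod br (w 1) (fconst Li) (\<lambda>x. \<alpha> x - \<beta> x))) Lj =
            - B (Ufun sm br w Lam i (\<lambda>x. \<alpha> x - \<beta> x)) (Ufun sm br w Lam j \<beta>)"
        proof -
          have an: "br (w 1 \<beta>) (Ufun sm br w Lam i (\<lambda>x. \<alpha> x - \<beta> x)) = - br (Ufun sm br w Lam i (\<lambda>x. \<alpha> x - \<beta> x)) (w 1 \<beta>)"
            by (rule anti)
          show ?thesis unfolding e1 e2 an Bneg Binv by (rule refl)
        qed
      qed
      also have "\<dots> = - (\<Sum>\<beta>\<in>?L. B (Ufun sm br w Lam i (\<lambda>x. \<alpha> x - \<beta> x)) (Ufun sm br w Lam j \<beta>))"
        by (simp add: sum_negf)
      also have "(\<Sum>\<beta>\<in>?L. B (Ufun sm br w Lam i (\<lambda>x. \<alpha> x - \<beta> x)) (Ufun sm br w Lam j \<beta>))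
          = fprod (\<lambda>a b. B b a) (Ufun sm br w Lam j) (Ufun sm br w Lam i) \<alpha>"
        unfolding fprod_def by simp
      also have "\<dots> = fprod B (Ufun sm br w Lam i) (Ufun sm br w Lam j) \<alpha>"
        by (rule fprod_swap[symmetric])
      finally show ?thesis .
    qed
    have "B (sm c (w 1 \<alpha>')) Lj = - (B (br (w 2 \<alpha>) Li) Lj + 1/2 * B P Lj)"
      unfolding S'' Bneg Badd Bsm by simp
    then have "B ds (fdiff sm (1, i) (Ufun sm br w Lam j) \<alpha>) = 1/2 * B P Lj"
      using T1 Z by simp
    then show "B (d_s sm hv d) (fdiff sm (1, i) (Ufun sm br w Lam j) \<alpha>)
           + 1 / 2 * fprod B (Ufun sm br w Lam i) (Ufun sm br w Lam j) \<alpha> = 0"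
      using BP ds_def by simp
  qed
qed

end
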